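(* Let $1\le p\le\infty$ and let $X$ be an Asymptotic $\ell_p$ space. Then $X$ admits a uniformly unique $l$-joint spreading model with respect to $\mathscr{F}_0(X)$, and every $l$-joint spreading model generated by sequences from $\mathscr{F}_0(X)$ is equivalent to the unit vector basis of $\ell_p$ (of $c_0$ if $p=\infty$).
   Context: $\mathscr{F}_0(X)$ is the set of normalized weakly null Schauder basic sequences in $X$. For $n\in\mathbb{N}$ and $C\ge1$, the game $G(p,n,C)$ has $n$ rounds; in each round player (S) chooses a closed finite-codimensional subspace $Y$ of $X$ and player (V) chooses a norm-one $y\in Y$; (S) wins if the resulting $(y_i)_{i=1}^n$ is $C$-equivalent to the unit vector basis of $\ell_p^n$ ($c_0^n$ if $p=\infty$). $X$ is Asymptotic $\ell_p$ (or $C$-Asymptotic $\ell_p$) if there is $C$ such that for every $n$, (S) has a winning strategy in $G(p,n,C)$. For infinite $M\subset\mathbb{N}$ with elements $M(1)<M(2)<\cdots$, a strict plegma family in $[M]^k$ is a sequence $(s_i)_{i=1}^l$ of $k$-element subsets $s_i=\{s_i(1)<\cdots<s_i(k)\}$ of $M$ with $s_{i_1}(j_1)<s_{i_2}(j_2)$ whenever $j_1<j_2$ and $s_{i_1}(j)<s_{i_2}(j)$ whenever $i_1<i_2$. An $l$-tuple $((x^i_n)_n)_{i=1}^l$ generates $(e^i_n)_{i\le l,n}$ (in a Banach space $(E,\|\cdot\|_* )$) as an $l$-joint spreading model if for some infinite $M$ there is a null sequence $(\delta_k)$ with $\big|\|\sum_{j\le k}\sum_{i\le l}a_{ij}x^i_{s_i(j)}\|-\|\sum_{j\le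 k}\sum_{i\le l}a_{ij}e^i_j\|_*\big|<\delta_k$ for all $k$, all $(a_{ij})\subset[-1,1]$ and all strict plegma families $(s_i)$ in $[M]^k$ with $M(k)\le s_1(1)$. Two families indexed by the same set are $K$-equivalent if there are $c,C>0$, $C/c\le K$, with $c\|\sum a_{ij}e^i_j\|\le\|\sum a_{ij}f^i_j\|\le C\|\sum a_{ij}e^i_j\|$. $X$ admits a uniformly unique $l$-joint spreading model with respect to $\mathscr{F}$ if there is $K>0$ such that for every $l$, any two $l$-joint spreading models generated by $l$-tuples of sequences in $\mathscr{F}$ are $K$-equivalent. *)

theory Defs
  imports "HOL-Analysis.Analysis" "HOL-Library.Infinite_Set"
begin

definition weakly_null :: "(nat \<Rightarrow> 'a::real_normed_vector) \<Rightarrow> bool" where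
  "weakly_null x \<longleftrightarrow>
     (\<forall>f :: 'a \<Rightarrow> real. bounded_linear f \<longrightarrow> (\<lambda>n. f (x n)) \<longlonglongrightarrow> 0)"

definition schauder_basic :: "(nat \<Rightarrow> 'a::real_normed_vector) \<Rightarrow> bool" where
  "schauder_basic x \<longleftrightarrow>
     (\<forall>y \<in> closure (span (range x)). \<exists>!a :: nat \<Rightarrow> real. (\<lambda>n. a n *\<^sub>R x n) sums y)"

definition F0 :: "(nat \<Rightarrow> 'a::real_normed_vector) \<Rightarrow> bool" where
  "F0 x \<longleftrightarrow> (\<forall>n. norm (x n) = 1) \<and> weakly_null x \<and> schauder_basic x"

definition fin_codim_subspace :: "'a::real_normed_vector set \<Rightarrow> bool" where
  "fin_codim_subspace Y \<longleftrightarrow> subspace Y \<and> closed Y \<and>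
     (\<exists>F. finite F \<and> span (Y \<union> F) = UNIV)"

definition lp_norm :: "ereal \<Rightarrow> 'i set \<Rightarrow> ('i \<Rightarrow> real) \<Rightarrow> real" where
  "lp_norm p I a =
     (if p = \<infinity> then (if I = {} then 0 else Max ((\<lambda>i. \<bar>a i\<bar>) ` I))
      else (\<Sum>i\<in>I. \<bar>a i\<bar> powr real_of_ereal p) powr (1 / real_of_ereal p))"

definition equiv_lpn :: "ereal \<Rightarrow> real \<Rightarrow> nat \<Rightarrow> (nat \<Rightarrow> 'a::real_normed_vector) \<Rightarrow> bool" where
  "equiv_lpn p C n y \<longleftrightarrow>
     (\<exists>c D. c > 0 \<and> D > 0 \<and> D / c \<le> C \<and>
        (\<forall>a :: nat \<Rightarrow> real.
           c * lp_norm p {..<n} a \<le> norm (\<Sum>i<n. a i *\<^sub>R y i) \<and>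
           norm (\<Sum>i<n. a i *\<^sub>R y i) \<le> D * lp_norm p {..<n} a))"

text \<open>A strategy of player (S) maps the history of (V)'s previous moves
  (y_1,...,y_{i-1}) to a closed finite-codimensional subspace.\<close>
definition winning_strategy ::
    "ereal \<Rightarrow> nat \<Rightarrow> real \<Rightarrow> ('a::banach list \<Rightarrow> 'a set) \<Rightarrow> bool" where
  "winning_strategy p n C \<sigma> \<longleftrightarrow>
     (\<forall>h. fin_codim_subspace (\<sigma> h)) \<and>
     (\<forall>y :: nat \<Rightarrow> 'a.
        (\<forall>i<n. y i \<in> \<sigma> (map y [0..<i]) \<and> norm (y i) = 1) \<longrightarrow> equiv_lpn p C n y)"

definition asymptotic_lp :: "'a::banach itself \<Rightarrow> ereal \<Rightarrow> bool" where
  "asymptotic_lp X p \<longleftrightarrow>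
     (\<exists>C\<ge>1. \<forall>n. \<exists>\<sigma> :: 'a list \<Rightarrow> 'a set. winning_strategy p n C \<sigma>)"

text \<open>Strict plegma family (s_i)_{i<l} in [M]^k, 0-based: s i j is s_{i+1}(j+1).\<close>
definition strict_plegma :: "nat set \<Rightarrow> nat \<Rightarrow> nat \<Rightarrow> (nat \<Rightarrow> nat \<Rightarrow> nat) \<Rightarrow> bool" where
  "strict_plegma M k l s \<longleftrightarrow>
     (\<forall>i<l. \<forall>j<k. s i j \<in> M) \<and>
     (\<forall>i1<l. \<forall>i2<l. \<forall>j1<k. \<forall>j2<k. j1 < j2 \<longrightarrow> s i1 j1 < s i2 j2) \<and>
     (\<forall>i1<l. \<forall>i2<l. \<forall>j<k. i1 < i2 \<longrightarrow> s i1 j < s i2 j)"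

definition fsupp :: "nat \<Rightarrow> (nat \<Rightarrow> nat \<Rightarrow> real) \<Rightarrow> bool" where
  "fsupp l a \<longleftrightarrow> finite {(i, j). a i j \<noteq> 0} \<and> (\<forall>i j. a i j \<noteq> 0 \<longrightarrow> i < l)"

text \<open>An l-joint spreading model (e^i_j) in a Banach space (E, ||.||_*) is represented
  by the function  N a = || \<Sum> a_{ij} e^i_j ||_*  on finitely supported arrays.
  Such functions are exactly the seminorms on the space of finitely supported arrays
  (every seminorm arises from vectors e^i_j in the completion of the quotient space).\<close>
definition array_seminorm :: "nat \<Rightarrow> ((nat \<Rightarrow> nat \<Rightarrow> real) \<Rightarrow> real) \<Rightarrow> bool" where
  "array_seminorm l N \<longleftrightarrow>
     (\<forall>a b. fsupp l a \<longrightarrow> fsupp l b \<longrightarrow> N (\<lambda>i j. a i j + b i j) \<le> N a + N b) \<and>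
     (\<forall>c a. fsupp l a \<longrightarrow> N (\<lambda>i j. c * a i j) = \<bar>c\<bar> * N a)"

text \<open>((x^i_n)_n)_{i<l} generates N as an l-joint spreading model. Here M(k) (1-based)
  is enumerate M (k - 1).\<close>
definition generates_jsm ::
    "nat \<Rightarrow> (nat \<Rightarrow> nat \<Rightarrow> 'a::real_normed_vector) \<Rightarrow> ((nat \<Rightarrow> nat \<Rightarrow> real) \<Rightarrow> real) \<Rightarrow> bool" where
  "generates_jsm l x N \<longleftrightarrow> array_seminorm l N \<and>
     (\<exists>M \<delta>. infinite M \<and> \<delta> \<longlonglongrightarrow> 0 \<and>
        (\<forall>k\<ge>1. \<forall>a s. (\<forall>i j. \<bar>a i j\<bar> \<le> 1) \<longrightarrow> strict_plegma M k l s \<longrightarrow>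
           enumerate M (k - 1) \<le> s 0 0 \<longrightarrow>
           \<bar>norm (\<Sum>j<k. \<Sum>i<l. a i j *\<^sub>R x i (s i j))
              - N (\<lambda>i j. if i < l \<and> j < k then a i j else 0)\<bar> < \<delta> k))"

definition jsm_equiv :: "real \<Rightarrow> nat \<Rightarrow> ((nat \<Rightarrow> nat \<Rightarrow> real) \<Rightarrow> real)
    \<Rightarrow> ((nat \<Rightarrow> nat \<Rightarrow> real) \<Rightarrow> real) \<Rightarrow> bool" where
  "jsm_equiv K l N1 N2 \<longleftrightarrow>
     (\<exists>c D. c > 0 \<and> D > 0 \<and> D / c \<le> K \<and>
        (\<forall>a. fsupp l a \<longrightarrow> c * N1 a \<le> N2 a \<and> N2 a \<le> D * N1 a))"

definition jsm_equiv_lp :: "ereal \<Rightarrow> nat \<Rightarrow> ((nat \<Rightarrow> nat \<Rightarrow> real) \<Rightarrow> real) \<Rightarrow> bool" where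
  "jsm_equiv_lp p l N \<longleftrightarrow>
     (\<exists>c D. c > 0 \<and> D > 0 \<and>
        (\<forall>a. fsupp l a \<longrightarrow>
           c * lp_norm p {(i, j). a i j \<noteq> 0} (\<lambda>(i, j). a i j) \<le> N a \<and>
           N a \<le> D * lp_norm p {(i, j). a i j \<noteq> 0} (\<lambda>(i, j). a i j)))"

definition unif_unique_jsm_F0 :: "'a::banach itself \<Rightarrow> bool" where
  "unif_unique_jsm_F0 X \<longleftrightarrow>
     (\<exists>K>0. \<forall>l\<ge>1. \<forall>(x :: nat \<Rightarrow> nat \<Rightarrow> 'a) (y :: nat \<Rightarrow> nat \<Rightarrow> 'a) N1 N2.
        (\<forall>i<l. F0 (x i)) \<longrightarrow> (\<forall>i<l. F0 (y i)) \<longrightarrow>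
        generates_jsm l x N1 \<longrightarrow> generates_jsm l y N2 \<longrightarrow> jsm_equiv K l N1 N2)"

end

theory Submission
  imports Defs
begin

lemma coeff_bound:
  fixes Y :: "'a::real_normed_vector set"
  assumes "subspace Y" "e \<notin> Y" "w - t *\<^sub>R e \<in> Y"
  shows "\<bar>t\<bar> * infdist e Y \<le> norm w"
proof (cases "t = 0")
  case True then show ?thesis by simp
next
  case False
  have "e - (1/t) *\<^sub>R w = - ((1/t) *\<^sub>R (w - t *\<^sub>R e))"
    using False by (simp add: algebra_simps)
  also have "\<dots> \<in> Y" using assms by (simp add: subspace_neg subspace_scale)
  finally have "infdist e Y \<le> dist e (e - (1/t) *\<^sub>R w)" by (rule infdist_le)
  also have "\<dots> = norm w / \<bar>t\<bar>" by (simp add: dist_norm)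
  finally show ?thesis using False by (simp add: field_simps mult.commute)
qed

lemma infdist_pos_sub:
  fixes Y :: "'a::real_normed_vector set"
  assumes "closed Y" "subspace Y" "e \<notin> Y"
  shows "infdist e Y > 0"
proof -
  have "Y \<noteq> {}" using assms subspace_0 by blast
  then show ?thesis using in_closed_iff_infdist_zero[OF assms(1)] assms(3) infdist_nonneg
    by (metis less_eq_real_def)
qed

lemma closed_ext:
  fixes Y :: "'a::banach set"
  assumes "closed Y" "subspace Y" "e \<notin> Y"
  shows "closed {x. \<exists>k. x - k *\<^sub>R e \<in> Y}"
proof (rule closed_sequential_limits[THEN iffD2], intro allI impI, elim conjE)
  fix w z assume wY: "\<forall>n. w n \<in> {x. \<exists>k. x - k *\<^sub>R e \<in> Y}" and lim: "w \<longlonglongrightarrow> z"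
  define r where "r = infdist e Y"
  have r: "r > 0" unfolding r_def by (rule infdist_pos_sub[OF assms])
  obtain t where t: "\<And>n. w n - t n *\<^sub>R e \<in> Y" using wY by simp metis
  have tb: "\<bar>t n - t m\<bar> * r \<le> norm (w n - w m)" for n m
  proof -
    have "(w n - w m) - (t n - t m) *\<^sub>R e = (w n - t n *\<^sub>R e) - (w m - t m *\<^sub>R e)"
      by (simp add: algebra_simps)
    also have "\<dots> \<in> Y" using t assms(2) by (simp add: subspace_diff)
    finally show ?thesis unfolding r_def using coeff_bound[OF assms(2,3)] by blast
  qed
  have "Cauchy w" using lim by (rule LIMSEQ_imp_Cauchy)
  have "Cauchy t"
  proof (rule metric_CauchyI)
    fix eps :: real assume "eps > 0"
    then have "eps * r > 0" using r by simp
    then obtain M where M: "\<And>m n. m \<ge> M \<Longrightarrow> n \<ge> M \<Longrightarrow> dist (w m) (w n) < eps * r"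
      using \<open>Cauchy w\<close> metric_CauchyD by blast
    show "\<exists>M. \<forall>m\<ge>M. \<forall>n\<ge>M. dist (t m) (t n) < eps"
    proof (intro exI allI impI)
      fix m n assume "m \<ge> M" "n \<ge> M"
      then have "\<bar>t m - t n\<bar> * r < eps * r" using tb[of m n] M[of m n] by (simp add: dist_norm)
      then show "dist (t m) (t n) < eps" using r by (simp add: dist_real_def)
    qed
  qed
  then obtain t0 where t0: "t \<longlonglongrightarrow> t0" using Cauchy_convergent_iff convergent_def by blast
  have "(\<lambda>n. w n - t n *\<^sub>R e) \<longlonglongrightarrow> z - t0 *\<^sub>R e"
    by (intro tendsto_intros lim t0)
  then have "z - t0 *\<^sub>R e \<in> Y"
    using closed_sequential_limits[THEN iffD1, OF assms(1), rule_format, of "\<lambda>n. w n - t n *\<^sub>R e"] t by simp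
  then show "z \<in> {x. \<exists>k. x - k *\<^sub>R e \<in> Y}" by blast
qed

lemma fincodim_proj:
  fixes F :: "'a::banach set"
  assumes "finite F"
  shows "\<And>Y. closed Y \<Longrightarrow> subspace Y \<Longrightarrow> span (Y \<union> F) = UNIV \<Longrightarrow>
    \<exists>P. bounded_linear P \<and> (\<forall>x. x - P x \<in> Y) \<and>
        (\<forall>x. weakly_null x \<longrightarrow> (\<lambda>n. P (x n)) \<longlonglongrightarrow> 0)"
  using assms
proof (induction F rule: finite_induct)
  case empty
  then have "Y = UNIV" by (metis Un_empty_right span_eq_iff)
  then show ?case by (intro exI[of _ "\<lambda>x. 0"]) auto
next
  case (insert e F Y)
  show ?case
  proof (cases "e \<in> Y")
    case True
    then have "Y \<union> insert e F = Y \<union> F" by blast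
    then show ?thesis using insert by simp
  next
    case False
    define Y' where "Y' = {x. \<exists>k. x - k *\<^sub>R e \<in> Y}"
    have Y'span: "Y' = span (insert e Y)"
      unfolding Y'_def span_insert using insert.prems(2) span_eq_iff by metis
    have cY': "closed Y'" unfolding Y'_def by (rule closed_ext[OF insert.prems(1,2) False])
    have sY': "subspace Y'" unfolding Y'span by simp
    have "span (Y \<union> insert e F) \<subseteq> span (Y' \<union> F)"
      by (rule span_mono) (auto simp: Y'span intro: span_base)
    then have "span (Y' \<union> F) = UNIV" using insert.prems(3) by auto
    from insert.IH[OF cY' sY' this] obtain P where
      P: "bounded_linear P" "\<And>x. x - P x \<in> Y'" "\<And>x. weakly_null x \<Longrightarrow> (\<lambda>n. P (x n)) \<longlonglongrightarrow> 0"
      by blast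
    define g where "g w = (THE t. w - t *\<^sub>R e \<in> Y)" for w
    have uniq: "g w = t" if "w - t *\<^sub>R e \<in> Y" for w t
      unfolding g_def
    proof (rule the_equality[where P="\<lambda>t. w - t *\<^sub>R e \<in> Y", OF that])
      fix t' assume "w - t' *\<^sub>R e \<in> Y"
      then have "(w - t *\<^sub>R e) - (w - t' *\<^sub>R e) \<in> Y" using that insert.prems(2) subspace_diff by blast
      then have "(t' - t) *\<^sub>R e \<in> Y" by (simp add: algebra_simps)
      show "t' = t"
      proof (rule ccontr)
        assume "t' \<noteq> t"
        then have "e = (1 / (t' - t)) *\<^sub>R ((t' - t) *\<^sub>R e)" by simp
        also have "\<dots> \<in> Y" using \<open>(t' - t) *\<^sub>R e \<in> Y\<close> insert.prems(2) subspace_scale by blast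
        finally show False using False by simp
      qed
    qed
    have gY: "w - g w *\<^sub>R e \<in> Y" if "w \<in> Y'" for w
      using that uniq unfolding Y'_def by auto
    define h where "h x = g (x - P x)" for x
    have hY: "x - P x - h x *\<^sub>R e \<in> Y" for x unfolding h_def using gY P(2) by blast
    obtain K where K: "\<And>x. norm (P x) \<le> norm x * K" "K > 0"
      using bounded_linear.pos_bounded[OF P(1)] by blast
    define r where "r = infdist e Y"
    have r: "r > 0" unfolding r_def by (rule infdist_pos_sub[OF insert.prems(1,2) False])
    have lin: "linear P" using P(1) bounded_linear.linear by blast
    have hadd: "h (x + z) = h x + h z" for x z
    proof -
      have "(x + z) - P (x + z) - (h x + h z) *\<^sub>R e = (x - P x - h x *\<^sub>R e) + (z - P z - h z *\<^sub>R e)"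
        using linear_add[OF lin] by (simp add: algebra_simps)
      also have "\<dots> \<in> Y" using hY insert.prems(2) subspace_add by blast
      finally show ?thesis unfolding h_def using uniq by blast
    qed
    have hscale: "h (c *\<^sub>R x) = c *\<^sub>R h x" for c x
    proof -
      have "(c *\<^sub>R x) - P (c *\<^sub>R x) - (c * h x) *\<^sub>R e = c *\<^sub>R (x - P x - h x *\<^sub>R e)"
        using linear_scale[OF lin] by (simp add: algebra_simps)
      also have "\<dots> \<in> Y" using hY insert.prems(2) subspace_scale by blast
      finally show ?thesis unfolding h_def using uniq by simp
    qed
    have hbd: "norm (h x) \<le> norm x * ((1 + K) / r)" for x
    proof -
      have "\<bar>h x\<bar> * r \<le> norm (x - P x)"
        unfolding r_def using coeff_bound[OF insert.prems(2) False hY[of x]] by simp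
      also have "\<dots> \<le> norm x + norm (P x)" by (rule norm_triangle_ineq4)
      also have "\<dots> \<le> norm x * (1 + K)" using K(1)[of x] by (simp add: algebra_simps)
      finally show ?thesis using r by (simp add: field_simps)
    qed
    have hbl: "bounded_linear h" by (rule bounded_linear_intro[OF hadd hscale hbd])
    define Q where "Q x = P x + h x *\<^sub>R e" for x
    have "bounded_linear Q" unfolding Q_def
      by (intro bounded_linear_add P(1) bounded_linear_compose[OF bounded_linear_scaleR_left hbl])
    moreover have "\<forall>x. x - Q x \<in> Y" using hY by (simp add: Q_def algebra_simps)
    moreover have "\<forall>x. weakly_null x \<longrightarrow> (\<lambda>n. Q (x n)) \<longlonglongrightarrow> 0"
    proof (intro allI impI)
      fix x :: "nat \<Rightarrow> 'a" assume wn: "weakly_null x"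
      have "(\<lambda>n. h (x n)) \<longlonglongrightarrow> 0" using wn hbl unfolding weakly_null_def by blast
      then have "(\<lambda>n. h (x n) *\<^sub>R e) \<longlonglongrightarrow> 0 *\<^sub>R e" by (intro tendsto_intros)
      then show "(\<lambda>n. Q (x n)) \<longlonglongrightarrow> 0" unfolding Q_def
        using tendsto_add[OF P(3)[OF wn]] by simp
    qed
    ultimately show ?thesis by blast
  qed
qed

lemma weakly_null_near:
  fixes x :: "nat \<Rightarrow> 'a::banach"
  assumes "weakly_null x" "fin_codim_subspace Y" "eps > 0"
  shows "\<exists>N0. \<forall>n\<ge>N0. \<exists>y\<in>Y. norm (x n - y) < eps"
proof -
  obtain F where F: "finite F" "span (Y \<union> F) = UNIV" using assms(2) fin_codim_subspace_def by blast
  obtain P where P: "\<forall>z. z - P z \<in> Y" "(\<lambda>n. P (x n)) \<longlonglongrightarrow> 0"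
    using fincodim_proj[OF F(1)] assms(1,2) F(2) unfolding fin_codim_subspace_def by blast
  obtain N0 where N0: "\<And>n. n \<ge> N0 \<Longrightarrow> norm (P (x n)) < eps"
    using LIMSEQ_D[OF P(2) assms(3)] by auto
  show ?thesis
  proof (intro exI allI impI)
    fix n assume "n \<ge> N0"
    then show "\<exists>y\<in>Y. norm (x n - y) < eps"
      using P(1) N0 by (intro bexI[of _ "x n - P (x n)"]) auto
  qed
qed


lemma play:
  fixes x :: "nat \<Rightarrow> nat \<Rightarrow> 'a::banach"
  assumes fc: "\<And>h. fin_codim_subspace (\<sigma> h)"
    and wn: "\<And>i. i < l \<Longrightarrow> weakly_null (x i)"
    and nx: "\<And>i m. i < l \<Longrightarrow> norm (x i m) = 1"
    and l: "l \<ge> 1" and M: "infinite M" and eps: "0 < eps" "eps < 1/2"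
  shows "\<exists>m y. \<forall>q<r. m q \<in> M \<and> T \<le> m q \<and> (\<forall>q'<q. m q' < m q) \<and>
           y q \<in> \<sigma> (map y [0..<q]) \<and> norm (y q) = 1 \<and> norm (y q - x (q mod l) (m q)) \<le> 2 * eps"
proof (induction r)
  case 0 then show ?case by simp
next
  case (Suc r)
  then obtain m y where IH: "\<forall>q<r. m q \<in> M \<and> T \<le> m q \<and> (\<forall>q'<q. m q' < m q) \<and>
           y q \<in> \<sigma> (map y [0..<q]) \<and> norm (y q) = 1 \<and> norm (y q - x (q mod l) (m q)) \<le> 2 * eps"
    by blast
  define Y where "Y = \<sigma> (map y [0..<r])"
  define i where "i = r mod l"
  have il: "i < l" using l unfolding i_def by simp
  obtain N0 where N0: "\<And>n. n \<ge> N0 \<Longrightarrow> \<exists>z\<in>Y. norm (x i n - z) < eps"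
    using weakly_null_near[OF wn[OF il] fc[of "map y [0..<r]"] eps(1)] unfolding Y_def by blast
  obtain m' where m': "m' \<in> M" "m' \<ge> N0 + T + Suc (sum m {..<r})"
    using M infinite_nat_iff_unbounded_le by blast
  obtain z where z: "z \<in> Y" "norm (x i m' - z) < eps" using N0[of m'] m' by auto
  have nz: "norm z > 1 - eps"
    using z(2) nx[OF il, of m'] norm_triangle_ineq2[of "x i m'" z] by linarith
  then have nzp: "norm z > 0" using eps by linarith
  define y' where "y' = (1 / norm z) *\<^sub>R z"
  have y'Y: "y' \<in> Y" unfolding y'_def using z(1) fc[of "map y [0..<r]"]
    unfolding Y_def fin_codim_subspace_def by (simp add: subspace_scale)
  have ny': "norm y' = 1" unfolding y'_def using nzp by simp
  have "y' - z = (1 / norm z - 1) *\<^sub>R z" unfolding y'_def by (simp add: algebra_simps)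
  then have "norm (y' - z) = \<bar>1 / norm z - 1\<bar> * norm z" by simp
  also have "\<dots> = \<bar>1 - norm z\<bar>" using nzp by (simp add: field_simps abs_mult[symmetric])
  also have "\<dots> < eps"
    using z(2) nx[OF il, of m'] norm_triangle_ineq3[of "x i m'" z] nz by (simp add: abs_if) 
  finally have d1: "norm (y' - z) < eps" .
  have "norm (y' - x i m') \<le> norm (y' - z) + norm (z - x i m')" by (rule norm_diff_triangle_le[of _ z]) simp_all
  also have "\<dots> \<le> 2 * eps" using d1 z(2) by (simp add: norm_minus_commute)
  finally have d2: "norm (y' - x i m') \<le> 2 * eps" .
  have mlt: "m q < m'" if "q < r" for q
  proof -
    have "m q \<le> sum m {..<r}" using that by (intro member_le_sum) auto
    then show ?thesis using m' by linarith
  qed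
  have mapeq: "map (y(r := y')) [0..<q] = map y [0..<q]" if "q \<le> r" for q
    using that by (intro map_cong) auto
  show ?case
  proof (intro exI[of _ "m(r := m')"] exI[of _ "y(r := y')"] allI impI)
    fix q assume q: "q < Suc r"
    show "(m(r := m')) q \<in> M \<and> T \<le> (m(r := m')) q \<and> (\<forall>q'<q. (m(r := m')) q' < (m(r := m')) q) \<and>
          (y(r := y')) q \<in> \<sigma> (map (y(r := y')) [0..<q]) \<and> norm ((y(r := y')) q) = 1 \<and>
          norm ((y(r := y')) q - x (q mod l) ((m(r := m')) q)) \<le> 2 * eps"
    proof (cases "q = r")
      case True
      then show ?thesis using m' mlt y'Y ny' d2 mapeq[of r] unfolding Y_def i_def by auto
    next
      case False
      then have "q < r" using q by simp
      then show ?thesis using IH mapeq[of q] by auto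
    qed
  qed
qed


lemma lp_nonneg: "finite I \<Longrightarrow> lp_norm p I f \<ge> 0"
  unfolding lp_norm_def
proof (cases "p = \<infinity>")
  case True
  assume fin: "finite I"
  show "0 \<le> (if p = \<infinity> then if I = {} then 0 else Max ((\<lambda>i. \<bar>f i\<bar>) ` I)
      else (\<Sum>i\<in>I. \<bar>f i\<bar> powr real_of_ereal p) powr (1 / real_of_ereal p))"
  proof (cases "I = {}")
    case False
    then obtain i where "i \<in> I" by blast
    then have "\<bar>f i\<bar> \<le> Max ((\<lambda>i. \<bar>f i\<bar>) ` I)" using fin by (intro Max_ge) auto
    then show ?thesis using True False by auto
  qed (simp add: True)
qed simp

lemma lp_scale:
  assumes "c \<ge> 0" "finite I" "1 \<le> p"
  shows "lp_norm p I (\<lambda>x. c * f x) = c * lp_norm p I f"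
proof (cases "p = \<infinity>")
  case True
  show ?thesis
  proof (cases "I = {}")
    case False
    have m: "mono ((*) c)" using assms(1) by (intro monoI mult_left_mono)
    have "(\<lambda>i. \<bar>c * f i\<bar>) ` I = (*) c ` ((\<lambda>i. \<bar>f i\<bar>) ` I)"
      using assms(1) by (auto simp: abs_mult)
    then show ?thesis using True False mono_Max_commute[OF m, of "(\<lambda>i. \<bar>f i\<bar>) ` I"] assms(2)
      by (simp add: lp_norm_def)
  qed (simp add: lp_norm_def True)
next
  case False
  define q where "q = real_of_ereal p"
  have q: "q \<ge> 1" using assms(3) False unfolding q_def
    by (cases p) auto
  have "(\<Sum>i\<in>I. \<bar>c * f i\<bar> powr q) = c powr q * (\<Sum>i\<in>I. \<bar>f i\<bar> powr q)"
    using assms(1) by (simp add: abs_mult powr_mult sum_distrib_left)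
  then have "lp_norm p I (\<lambda>x. c * f x) = (c powr q * (\<Sum>i\<in>I. \<bar>f i\<bar> powr q)) powr (1/q)"
    using False by (simp add: lp_norm_def q_def)
  also have "\<dots> = (c powr q) powr (1/q) * (\<Sum>i\<in>I. \<bar>f i\<bar> powr q) powr (1/q)"
    using assms(1) by (simp add: powr_mult sum_nonneg)
  also have "(c powr q) powr (1/q) = c" using q assms(1) by (simp add: powr_powr powr_one)
  finally show ?thesis using False by (simp add: lp_norm_def q_def)
qed

lemma lp_unit:
  fixes n :: nat
  assumes "n \<ge> 1"
  shows "lp_norm p {..<n} (\<lambda>i. if i = 0 then 1 else 0) = 1"
proof (cases "p = \<infinity>")
  case True
  have "Max ((\<lambda>i. \<bar>if i = 0 then 1 else 0 :: real\<bar>) ` {..<n}) = 1"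
  proof (rule antisym)
    have ne: "(\<lambda>i. \<bar>if i = 0 then 1 else 0 :: real\<bar>) ` {..<n} \<noteq> {}"
    proof -
      have "(0::nat) \<in> {..<n}" using assms by simp
      then show ?thesis by blast
    qed
    have bd: "\<forall>a\<in>(\<lambda>i. \<bar>if i = 0 then 1 else 0 :: real\<bar>) ` {..<n}. a \<le> 1" by auto
    show "Max ((\<lambda>i. \<bar>if i = 0 then 1 else 0 :: real\<bar>) ` {..<n}) \<le> 1"
      using Max_le_iff[OF finite_imageI[OF finite_lessThan] ne] bd by blast
    show "1 \<le> Max ((\<lambda>i. \<bar>if i = 0 then 1 else 0 :: real\<bar>) ` {..<n})"
    proof (rule Max_ge[OF finite_imageI[OF finite_lessThan]])
      show "1 \<in> (\<lambda>i. \<bar>if i = 0 then 1 else 0 :: real\<bar>) ` {..<n}"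
        using assms by (intro rev_image_eqI[of 0]) auto
    qed
  qed
  moreover have "{..<n} \<noteq> {}" using assms lessThan_empty_iff by (metis not_one_le_zero)
  ultimately show ?thesis using True by (auto simp: lp_norm_def)
next
  case False
  have "(\<Sum>i<n. \<bar>if i = 0 then 1 else 0 :: real\<bar> powr real_of_ereal p) = (\<Sum>i<n. if i = 0 then 1 else 0)"
    by (intro sum.cong) auto
  also have "\<dots> = 1" using assms by (simp add: sum.delta)
  finally show ?thesis using False by (simp add: lp_norm_def)
qed

lemma equiv_bounds:
  fixes y :: "nat \<Rightarrow> 'a::real_normed_vector"
  assumes "equiv_lpn p C n y" "n \<ge> 1" "norm (y 0) = 1"
  shows "lp_norm p {..<n} a / C \<le> norm (\<Sum>i<n. a i *\<^sub>R y i) \<and>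
         norm (\<Sum>i<n. a i *\<^sub>R y i) \<le> C * lp_norm p {..<n} a"
proof -
  obtain c D where cD: "c > 0" "D > 0" "D / c \<le> C"
    "\<And>a. c * lp_norm p {..<n} a \<le> norm (\<Sum>i<n. a i *\<^sub>R y i) \<and>
         norm (\<Sum>i<n. a i *\<^sub>R y i) \<le> D * lp_norm p {..<n} a"
    using assms(1) unfolding equiv_lpn_def by blast
  define e where "e = (\<lambda>i::nat. if i = 0 then 1 else (0::real))"
  have "(\<Sum>i<n. e i *\<^sub>R y i) = (\<Sum>i<n. if i = 0 then y i else 0)"
    unfolding e_def by (intro sum.cong) auto
  also have "\<dots> = y 0" using assms(2) by (simp add: sum.delta)
  finally have se: "norm (\<Sum>i<n. e i *\<^sub>R y i) = 1" using assms(3) by simp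
  have le: "lp_norm p {..<n} e = 1" unfolding e_def by (rule lp_unit[OF assms(2)])
  have c1: "c \<le> 1" and D1: "D \<ge> 1" using cD(4)[of e] se le by auto
  have DC: "D \<le> C * c" using cD(1,3) by (simp add: field_simps)
  have Cpos: "C > 0" using cD by (smt (verit) divide_pos_pos)
  have L0: "lp_norm p {..<n} a \<ge> 0" by (rule lp_nonneg) simp
  have "lp_norm p {..<n} a / C \<le> c * lp_norm p {..<n} a"
  proof -
    have "1 / C \<le> c" using D1 DC Cpos by (simp add: field_simps)
    then show ?thesis using L0 mult_right_mono[of "1/C" c "lp_norm p {..<n} a"] by simp
  qed
  moreover have "D * lp_norm p {..<n} a \<le> C * lp_norm p {..<n} a"
    using DC c1 Cpos L0 by (intro mult_right_mono) (auto, smt (verit) mult_left_le)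
  ultimately show ?thesis using cD(4)[of a] by linarith
qed

lemma sum_reindex2:
  fixes f :: "nat \<Rightarrow> nat \<Rightarrow> 'b::comm_monoid_add"
  assumes "l \<ge> 1"
  shows "(\<Sum>j<k. \<Sum>i<l. f i j) = (\<Sum>r<k*l. f (r mod l) (r div l))"
proof -
  have "(\<Sum>r<k*l. f (r mod l) (r div l)) = (\<Sum>j<k. \<Sum>r\<in>{j*l..<j*l+l}. f (r mod l) (r div l))"
    by (rule sum.nat_group[symmetric])
  also have "\<dots> = (\<Sum>j<k. \<Sum>i<l. f i j)"
  proof (rule sum.cong[OF refl])
    fix j
    have "(\<Sum>r\<in>{j*l..<j*l+l}. f (r mod l) (r div l)) = (\<Sum>i\<in>{0..<l}. f ((j*l+i) mod l) ((j*l+i) div l))"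
      by (subst sum.atLeastLessThan_shift_0) (simp add: comp_def)
    also have "\<dots> = (\<Sum>i<l. f i j)"
      using assms by (intro sum.cong) auto
    finally show "(\<Sum>r\<in>{j*l..<j*l+l}. f (r mod l) (r div l)) = (\<Sum>i<l. f i j)" .
  qed
  finally show ?thesis by simp
qed


lemma lp_reindex:
  fixes a :: "nat \<Rightarrow> nat \<Rightarrow> real"
  assumes l: "l \<ge> 1" and k: "k \<ge> 1" and supp: "\<And>i j. a i j \<noteq> 0 \<Longrightarrow> i < l \<and> j < k"
  shows "lp_norm p {..<k*l} (\<lambda>r. a (r mod l) (r div l)) = lp_norm p {(i,j). a i j \<noteq> 0} (\<lambda>(i,j). a i j)"
proof -
  define \<phi> where "\<phi> r = (r mod l, r div l)" for r
  define G where "G = {..<l} \<times> {..<k}"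
  define S where "S = {(i,j). a i j \<noteq> 0}"
  have SG: "S \<subseteq> G" using supp unfolding S_def G_def by auto
  have fG: "finite G" unfolding G_def by simp
  have fS: "finite S" using finite_subset[OF SG fG] .
  have bij: "bij_betw \<phi> {..<k*l} G"
    unfolding bij_betw_def
  proof
    show "inj_on \<phi> {..<k*l}" unfolding \<phi>_def inj_on_def
      by (metis div_mult_mod_eq prod.inject)
    show "\<phi> ` {..<k*l} = G"
    proof
      show "\<phi> ` {..<k*l} \<subseteq> G" unfolding G_def \<phi>_def using l
        by (auto simp: less_mult_imp_div_less)
      show "G \<subseteq> \<phi> ` {..<k*l}"
      proof
        fix x assume "x \<in> G"
        then obtain i j where x: "x = (i,j)" "i < l" "j < k" unfolding G_def by auto
        have "j * l + i < k * l"
        proof -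
          have "j * l + i < j * l + l" using x by simp
          also have "\<dots> = (j+1) * l" by simp
          also have "\<dots> \<le> k * l" using x by (intro mult_right_mono) auto
          finally show ?thesis .
        qed
        moreover have "\<phi> (j * l + i) = x" unfolding \<phi>_def using x by simp
        ultimately show "x \<in> \<phi> ` {..<k*l}" by (metis image_eqI lessThan_iff)
      qed
    qed
  qed
  define g where "g = (\<lambda>(i,j). a i j)"
  have comp: "(\<lambda>r. a (r mod l) (r div l)) = (\<lambda>r. g (\<phi> r))" unfolding g_def \<phi>_def by auto
  have gz: "\<forall>x\<in>G - S. g x = 0" unfolding S_def g_def by auto
  show ?thesis
  proof (cases "p = \<infinity>")
    case False
    have "(\<Sum>r<k*l. \<bar>g (\<phi> r)\<bar> powr real_of_ereal p) = (\<Sum>x\<in>G. \<bar>g x\<bar> powr real_of_ereal p)"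
      by (rule sum.reindex_bij_betw[OF bij])
    also have "\<dots> = (\<Sum>x\<in>S. \<bar>g x\<bar> powr real_of_ereal p)"
      by (rule sum.mono_neutral_right[OF fG SG]) (use gz in auto)
    finally show ?thesis using False unfolding lp_norm_def comp S_def g_def by simp
  next
    case True
    have img: "(\<lambda>r. \<bar>g (\<phi> r)\<bar>) ` {..<k*l} = (\<lambda>x. \<bar>g x\<bar>) ` G"
      using bij_betw_imp_surj_on[OF bij] by (auto simp: image_comp[symmetric])
    have ne: "{..<k*l} \<noteq> {}"
    proof -
      have "0 < k * l" using k l by simp
      then have "0 \<in> {..<k*l}" by simp
      then show ?thesis by blast
    qed
    have Gne: "G \<noteq> {}" using ne img by auto
    have "Max ((\<lambda>x. \<bar>g x\<bar>) ` G) = (if S = {} then 0 else Max ((\<lambda>x. \<bar>g x\<bar>) ` S))"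
    proof (cases "S = {}")
      case True
      then have "(\<lambda>x. \<bar>g x\<bar>) ` G = {0}" using gz Gne by auto
      then show ?thesis using True by simp
    next
      case False
      have fi: "finite ((\<lambda>x. \<bar>g x\<bar>) ` S)" using fS by simp
      have fi2: "finite ((\<lambda>x. \<bar>g x\<bar>) ` G)" using fG by simp
      have n1: "(\<lambda>x. \<bar>g x\<bar>) ` S \<noteq> {}" using False by simp
      have n2: "(\<lambda>x. \<bar>g x\<bar>) ` G \<noteq> {}" using Gne by simp
      obtain s0 where s0: "s0 \<in> S" using False by blast
      have "Max ((\<lambda>x. \<bar>g x\<bar>) ` G) = Max ((\<lambda>x. \<bar>g x\<bar>) ` S)"
      proof (rule antisym)
        have "\<forall>y\<in>(\<lambda>x. \<bar>g x\<bar>) ` G. y \<le> Max ((\<lambda>x. \<bar>g x\<bar>) ` S)"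
        proof
          fix y assume "y \<in> (\<lambda>x. \<bar>g x\<bar>) ` G"
          then obtain x where x: "x \<in> G" "y = \<bar>g x\<bar>" by blast
          show "y \<le> Max ((\<lambda>x. \<bar>g x\<bar>) ` S)"
          proof (cases "x \<in> S")
            case True then show ?thesis using x fi by (intro Max_ge) auto
          next
            case False
            then have "y = 0" using x gz by auto
            also have "0 \<le> \<bar>g s0\<bar>" by simp
            also have "\<bar>g s0\<bar> \<le> Max ((\<lambda>x. \<bar>g x\<bar>) ` S)" using s0 fi by (intro Max_ge) auto
            finally show ?thesis .
          qed
        qed
        then show "Max ((\<lambda>x. \<bar>g x\<bar>) ` G) \<le> Max ((\<lambda>x. \<bar>g x\<bar>) ` S)"
          using Max_le_iff[OF fi2 n2] by blast
        have "\<forall>y\<in>(\<lambda>x. \<bar>g x\<bar>) ` S. y \<le> Max ((\<lambda>x. \<bar>g x\<bar>) ` G)"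
          using SG fi2 by (auto intro: Max_ge)
        then show "Max ((\<lambda>x. \<bar>g x\<bar>) ` S) \<le> Max ((\<lambda>x. \<bar>g x\<bar>) ` G)"
          using Max_le_iff[OF fi n1] by blast
      qed
      then show ?thesis using False by simp
    qed
    then have M: "Max ((\<lambda>r. \<bar>g (\<phi> r)\<bar>) ` {..<k*l}) = (if S = {} then 0 else Max ((\<lambda>x. \<bar>g x\<bar>) ` S))"
      using img by simp
    have "lp_norm p {..<k*l} (\<lambda>r. g (\<phi> r)) = lp_norm p S g"
      unfolding lp_norm_def using True ne M by simp
    then show ?thesis unfolding comp S_def g_def .
  qed
qed


lemma main_bound1:
  fixes x :: "nat \<Rightarrow> nat \<Rightarrow> 'a::banach"
  assumes C: "C \<ge> 1" and strat: "\<forall>n. \<exists>\<sigma>::'a list \<Rightarrow> 'a set. winning_strategy p n C \<sigma>"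
    and l: "l \<ge> 1" and F: "\<forall>i<l. F0 (x i)" and gen: "generates_jsm l x N"
    and fs: "fsupp l a" and ab: "\<forall>i j. \<bar>a i j\<bar> \<le> 1"
  shows "lp_norm p {(i,j). a i j \<noteq> 0} (\<lambda>(i,j). a i j) / C \<le> N a \<and>
         N a \<le> C * lp_norm p {(i,j). a i j \<noteq> 0} (\<lambda>(i,j). a i j)"
proof -
  obtain M \<delta> where M: "infinite M" and \<delta>: "\<delta> \<longlonglongrightarrow> 0" and
    H: "\<forall>k\<ge>1. \<forall>a s. (\<forall>i j. \<bar>a i j\<bar> \<le> 1) \<longrightarrow> strict_plegma M k l s \<longrightarrow>
           enumerate M (k - 1) \<le> s 0 0 \<longrightarrow>
           \<bar>norm (\<Sum>j<k. \<Sum>i<l. a i j *\<^sub>R x i (s i j))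
              - N (\<lambda>i j. if i < l \<and> j < k then a i j else 0)\<bar> < \<delta> k"
    using gen unfolding generates_jsm_def by blast
  define S where "S = {(i,j). a i j \<noteq> 0}"
  define L where "L = lp_norm p S (\<lambda>(i,j). a i j)"
  have fS: "finite S" using fs unfolding fsupp_def S_def by simp
  define k0 where "k0 = Suc (sum snd S)"
  have supp: "a i j \<noteq> 0 \<Longrightarrow> i < l \<and> j < k0" for i j
  proof -
    assume "a i j \<noteq> 0"
    then have "(i,j) \<in> S" "i < l" using fs unfolding S_def fsupp_def by auto
    then have "snd (i,j) \<le> sum snd S" using fS by (intro member_le_sum) auto
    then show ?thesis using \<open>i < l\<close> unfolding k0_def by simp
  qed
  have wn: "\<And>i. i < l \<Longrightarrow> weakly_null (x i)" and nx: "\<And>i m. i < l \<Longrightarrow> norm (x i m) = 1"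
    using F unfolding F0_def by auto
  have key: "L / C - \<eta> - \<delta> k \<le> N a \<and> N a \<le> C * L + \<eta> + \<delta> k" if k: "k \<ge> k0" and eta: "\<eta> > 0" for k \<eta>
  proof -
    define n where "n = k * l"
    have k1: "k \<ge> 1" using k unfolding k0_def by simp
    have n1: "n \<ge> 1" using k1 l unfolding n_def by simp
    obtain \<sigma> :: "'a list \<Rightarrow> 'a set" where ws: "winning_strategy p n C \<sigma>" using strat by blast
    have fc: "\<And>h. fin_codim_subspace (\<sigma> h)" using ws unfolding winning_strategy_def by blast
    define eps where "eps = min (1/4) (\<eta> / (2 * real n))"
    have npos: "real n > 0" using n1 by simp
    have eps: "0 < eps" "eps < 1/2" unfolding eps_def using eta npos by auto
    have neps: "real n * (2 * eps) \<le> \<eta>"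
    proof -
      have "eps \<le> \<eta> / (2 * real n)" unfolding eps_def by simp
      then show ?thesis using npos by (simp add: field_simps)
    qed
    obtain m y where P: "\<forall>q<n. m q \<in> M \<and> enumerate M (k - 1) \<le> m q \<and> (\<forall>q'<q. m q' < m q) \<and>
           y q \<in> \<sigma> (map y [0..<q]) \<and> norm (y q) = 1 \<and> norm (y q - x (q mod l) (m q)) \<le> 2 * eps"
      using play[where \<sigma>=\<sigma> and l=l and x=x and M=M and eps=eps and T="enumerate M (k - 1)" and r=n, OF fc wn nx l M eps] by blast
    define s where "s i j = m (j * l + i)" for i j
    have idx: "j * l + i < n" if "i < l" "j < k" for i j
    proof -
      have "j * l + i < j * l + l" using that by simp
      also have "\<dots> = (j+1) * l" by simp
      also have "\<dots> \<le> k * l" using that by (intro mult_right_mono) auto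
      finally show ?thesis unfolding n_def .
    qed
    have pl: "strict_plegma M k l s" unfolding strict_plegma_def
    proof (intro conjI allI impI)
      fix i j assume "i < l" "j < k"
      then show "s i j \<in> M" unfolding s_def using P idx by blast
    next
      fix i1 i2 j1 j2 assume h: "i1 < l" "i2 < l" "j1 < k" "j2 < k" "j1 < j2"
      have "j1 * l + i1 < j1 * l + l" using h by simp
      also have "\<dots> = (j1 + 1) * l" by simp
      also have "\<dots> \<le> j2 * l" using h by (intro mult_right_mono) auto
      also have "\<dots> \<le> j2 * l + i2" by simp
      finally show "s i1 j1 < s i2 j2" unfolding s_def using P idx h by blast
    next
      fix i1 i2 j assume h: "i1 < l" "i2 < l" "j < k" "i1 < i2"
      then show "s i1 j < s i2 j" unfolding s_def using P idx[of i2 j] by simp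
    qed
    have s00: "enumerate M (k - 1) \<le> s 0 0" unfolding s_def using P n1 by simp
    have trunc: "(\<lambda>i j. if i < l \<and> j < k then a i j else 0) = a"
    proof (intro ext)
      fix i j
      show "(if i < l \<and> j < k then a i j else 0) = a i j"
        using supp[of i j] k by (cases "a i j = 0") auto
    qed
    have H1: "\<bar>norm (\<Sum>j<k. \<Sum>i<l. a i j *\<^sub>R x i (s i j)) - N a\<bar> < \<delta> k"
      using H[rule_format, where k=k and a=a and s=s, OF k1 ab[rule_format] pl s00] unfolding trunc .
    define b where "b r = a (r mod l) (r div l)" for r
    have "(\<Sum>j<k. \<Sum>i<l. a i j *\<^sub>R x i (s i j)) =
        (\<Sum>r<k*l. a (r mod l) (r div l) *\<^sub>R x (r mod l) (s (r mod l) (r div l)))"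
      by (rule sum_reindex2[OF l])
    also have "\<dots> = (\<Sum>r<n. b r *\<^sub>R x (r mod l) (m r))"
      unfolding s_def b_def n_def div_mult_mod_eq ..
    finally have V1: "(\<Sum>j<k. \<Sum>i<l. a i j *\<^sub>R x i (s i j)) = (\<Sum>r<n. b r *\<^sub>R x (r mod l) (m r))" .
    define V2 where "V2 = (\<Sum>r<n. b r *\<^sub>R y r)"
    have "(\<Sum>r<n. b r *\<^sub>R x (r mod l) (m r)) - V2 = (\<Sum>r<n. b r *\<^sub>R (x (r mod l) (m r) - y r))"
      unfolding V2_def by (simp add: sum_subtractf scaleR_diff_right)
    also have "norm \<dots> \<le> (\<Sum>r<n. norm (b r *\<^sub>R (x (r mod l) (m r) - y r)))" by (rule norm_sum)
    also have "\<dots> \<le> (\<Sum>r<n. 2 * eps)"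
    proof (rule sum_mono)
      fix r assume "r \<in> {..<n}"
      then have "norm (y r - x (r mod l) (m r)) \<le> 2 * eps" using P by blast
      then have "norm (x (r mod l) (m r) - y r) \<le> 2 * eps" by (metis norm_minus_commute)
      moreover have "\<bar>b r\<bar> \<le> 1" unfolding b_def using ab by simp
      ultimately show "norm (b r *\<^sub>R (x (r mod l) (m r) - y r)) \<le> 2 * eps"
      proof -
        have "\<bar>b r\<bar> * norm (x (r mod l) (m r) - y r) \<le> 1 * (2 * eps)"
          using \<open>\<bar>b r\<bar> \<le> 1\<close> \<open>norm (x (r mod l) (m r) - y r) \<le> 2 * eps\<close>
          by (intro mult_mono) auto
        then show ?thesis by simp
      qed
    qed
    also have "\<dots> = real n * (2 * eps)" by simp
    finally have diff: "norm ((\<Sum>r<n. b r *\<^sub>R x (r mod l) (m r)) - V2) \<le> \<eta>" using neps by linarith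
    have eb: "lp_norm p {..<n} b / C \<le> norm V2 \<and> norm V2 \<le> C * lp_norm p {..<n} b"
      unfolding V2_def
    proof (rule equiv_bounds[OF _ n1])
      have "\<forall>i<n. y i \<in> \<sigma> (map y [0..<i]) \<and> norm (y i) = 1" using P by blast
      then show "equiv_lpn p C n y" using ws unfolding winning_strategy_def by blast
      have "0 < n" using n1 by simp
      then show "norm (y 0) = 1" using P by blast
    qed
    have Lb: "lp_norm p {..<n} b = L"
    proof -
      have suppk: "\<And>i j. a i j \<noteq> 0 \<Longrightarrow> i < l \<and> j < k" using supp k by fastforce
      show ?thesis unfolding L_def S_def b_def n_def by (rule lp_reindex[OF l k1 suppk])
    qed
    have "\<bar>norm (\<Sum>r<n. b r *\<^sub>R x (r mod l) (m r)) - norm V2\<bar> \<le> \<eta>"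
      using norm_triangle_ineq3[of "\<Sum>r<n. b r *\<^sub>R x (r mod l) (m r)" V2] diff by linarith
    then have A1: "norm (\<Sum>r<n. b r *\<^sub>R x (r mod l) (m r)) - norm V2 \<le> \<eta>"
        "norm V2 - norm (\<Sum>r<n. b r *\<^sub>R x (r mod l) (m r)) \<le> \<eta>" by (simp_all add: abs_le_iff)
    have A2: "norm (\<Sum>r<n. b r *\<^sub>R x (r mod l) (m r)) - N a < \<delta> k"
        "N a - norm (\<Sum>r<n. b r *\<^sub>R x (r mod l) (m r)) < \<delta> k"
      using H1 unfolding V1 by (simp_all add: abs_less_iff)
    have A3: "L / C \<le> norm V2" "norm V2 \<le> C * L" using eb unfolding Lb by simp_all
    show ?thesis using A1 A2 A3 by linarith
  qed
  have lower: "L / C \<le> N a"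
  proof (rule field_le_epsilon)
    fix e :: real assume e: "e > 0"
    obtain k1 where k1: "\<And>k. k \<ge> k1 \<Longrightarrow> norm (\<delta> k - 0) < e/2"
      using LIMSEQ_D[OF \<delta>, of "e/2"] e by auto
    have "L / C - e/2 - \<delta> (max k0 k1) \<le> N a" using key[of "max k0 k1" "e/2"] e by simp
    moreover have "\<delta> (max k0 k1) < e/2" using k1[of "max k0 k1"] by simp
    ultimately show "L / C \<le> N a + e" by linarith
  qed
  have upper: "N a \<le> C * L"
  proof (rule field_le_epsilon)
    fix e :: real assume e: "e > 0"
    obtain k1 where k1: "\<And>k. k \<ge> k1 \<Longrightarrow> norm (\<delta> k - 0) < e/2"
      using LIMSEQ_D[OF \<delta>, of "e/2"] e by auto
    have "N a \<le> C * L + e/2 + \<delta> (max k0 k1)" using key[of "max k0 k1" "e/2"] e by simp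
    moreover have "\<delta> (max k0 k1) < e/2" using k1[of "max k0 k1"] by simp
    ultimately show "N a \<le> C * L + e" by linarith
  qed
  show ?thesis using lower upper unfolding L_def S_def by simp
qed


lemma main_bound:
  fixes x :: "nat \<Rightarrow> nat \<Rightarrow> 'a::banach"
  assumes C: "C \<ge> 1" and strat: "\<forall>n. \<exists>\<sigma>::'a list \<Rightarrow> 'a set. winning_strategy p n C \<sigma>"
    and p: "1 \<le> p"
    and l: "l \<ge> 1" and F: "\<forall>i<l. F0 (x i)" and gen: "generates_jsm l x N"
    and fs: "fsupp l a"
  shows "lp_norm p {(i,j). a i j \<noteq> 0} (\<lambda>(i,j). a i j) / C \<le> N a \<and>
         N a \<le> C * lp_norm p {(i,j). a i j \<noteq> 0} (\<lambda>(i,j). a i j)"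
proof -
  define S where "S = {(i,j). a i j \<noteq> 0}"
  have fS: "finite S" using fs unfolding fsupp_def S_def by simp
  define \<mu> where "\<mu> = 1 + (\<Sum>z\<in>S. \<bar>(\<lambda>(i,j). a i j) z\<bar>)"
  have mu: "\<mu> > 0" unfolding \<mu>_def by (smt (verit) sum_nonneg abs_ge_zero)
  have amu: "\<bar>a i j\<bar> \<le> \<mu>" for i j
  proof (cases "a i j = 0")
    case True then show ?thesis using mu by simp
  next
    case False
    then have "(i,j) \<in> S" unfolding S_def by simp
    then have "\<bar>(\<lambda>(i,j). a i j) (i,j)\<bar> \<le> (\<Sum>z\<in>S. \<bar>(\<lambda>(i,j). a i j) z\<bar>)"
      using fS by (intro member_le_sum) auto
    then show ?thesis unfolding \<mu>_def by simp
  qed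
  define b where "b i j = a i j / \<mu>" for i j
  have bb: "\<forall>i j. \<bar>b i j\<bar> \<le> 1" unfolding b_def using amu mu by (simp add: abs_div)
  have supp_eq: "{(i,j). b i j \<noteq> 0} = S" unfolding b_def S_def using mu by auto
  have fsb: "fsupp l b" using fs mu unfolding fsupp_def b_def by simp
  have aeq: "a = (\<lambda>i j. \<mu> * b i j)" unfolding b_def using mu by (intro ext) simp
  have Na: "N a = \<mu> * N b"
  proof -
    have "N (\<lambda>i j. \<mu> * b i j) = \<bar>\<mu>\<bar> * N b" using gen fsb unfolding generates_jsm_def array_seminorm_def by blast
    then show ?thesis using aeq mu by simp
  qed
  have geq: "(\<lambda>(i,j). a i j) = (\<lambda>z. \<mu> * (\<lambda>(i,j). b i j) z)" unfolding aeq by auto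
  have La: "lp_norm p S (\<lambda>(i,j). a i j) = \<mu> * lp_norm p S (\<lambda>(i,j). b i j)"
    unfolding geq using lp_scale[of \<mu> S p] mu fS p by simp
  have Bb: "lp_norm p S (\<lambda>(i,j). b i j) / C \<le> N b \<and> N b \<le> C * lp_norm p S (\<lambda>(i,j). b i j)"
    using main_bound1[OF C strat l F gen fsb bb] unfolding supp_eq .
  have "\<mu> * (lp_norm p S (\<lambda>(i,j). b i j) / C) \<le> \<mu> * N b"
    using Bb mu by (intro mult_left_mono) auto
  moreover have "\<mu> * N b \<le> \<mu> * (C * lp_norm p S (\<lambda>(i,j). b i j))"
    using Bb mu by (intro mult_left_mono) auto
  ultimately show ?thesis unfolding S_def[symmetric] La Na by (simp add: algebra_simps)
qed

theorem corollary4p12: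
  fixes p :: ereal
  assumes "1 \<le> p"
    and "asymptotic_lp TYPE('a::banach) p"
  shows "unif_unique_jsm_F0 TYPE('a) \<and>
    (\<forall>l\<ge>1. \<forall>(x :: nat \<Rightarrow> nat \<Rightarrow> 'a) N.
       (\<forall>i<l. F0 (x i)) \<longrightarrow> generates_jsm l x N \<longrightarrow> jsm_equiv_lp p l N)"
proof -
  obtain C where C: "C \<ge> 1" and strat: "\<forall>n. \<exists>\<sigma>::'a list \<Rightarrow> 'a set. winning_strategy p n C \<sigma>"
    using assms(2) unfolding asymptotic_lp_def by blast
  have Cpos: "C > 0" using C by simp
  have part2: "\<forall>l\<ge>1. \<forall>(x :: nat \<Rightarrow> nat \<Rightarrow> 'a) N.
       (\<forall>i<l. F0 (x i)) \<longrightarrow> generates_jsm l x N \<longrightarrow> jsm_equiv_lp p l N"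
  proof (intro allI impI)
    fix l and x :: "nat \<Rightarrow> nat \<Rightarrow> 'a" and N
    assume l: "l \<ge> 1" and F: "\<forall>i<l. F0 (x i)" and gen: "generates_jsm l x N"
    have "\<forall>a. fsupp l a \<longrightarrow> 1 / C * lp_norm p {(i, j). a i j \<noteq> 0} (\<lambda>(i, j). a i j) \<le> N a \<and>
        N a \<le> C * lp_norm p {(i, j). a i j \<noteq> 0} (\<lambda>(i, j). a i j)"
    proof (intro allI impI)
      fix a assume fs: "fsupp l a"
      note B = main_bound[OF C strat assms(1) l F gen fs]
      then show "1 / C * lp_norm p {(i, j). a i j \<noteq> 0} (\<lambda>(i, j). a i j) \<le> N a \<and>
        N a \<le> C * lp_norm p {(i, j). a i j \<noteq> 0} (\<lambda>(i, j). a i j)" by simp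
    qed
    moreover have "1 / C > 0" using Cpos by simp
    ultimately show "jsm_equiv_lp p l N" unfolding jsm_equiv_lp_def using Cpos by blast
  qed
  have part1: "unif_unique_jsm_F0 TYPE('a)" unfolding unif_unique_jsm_F0_def
  proof (intro exI[of _ "C*C*C*C"] conjI allI impI)
    show "0 < C*C*C*C" using Cpos by simp
    fix l and x y :: "nat \<Rightarrow> nat \<Rightarrow> 'a" and N1 N2
    assume l: "l \<ge> 1" and Fx: "\<forall>i<l. F0 (x i)" and Fy: "\<forall>i<l. F0 (y i)"
      and g1: "generates_jsm l x N1" and g2: "generates_jsm l y N2"
    show "jsm_equiv (C*C*C*C) l N1 N2" unfolding jsm_equiv_def
    proof (rule exI[of _ "1/(C*C)"], rule exI[of _ "C*C"], intro conjI allI impI)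
      show "0 < 1 / (C*C)" "0 < C*C" using Cpos by simp_all
      show "C * C / (1 / (C * C)) \<le> C * C * C * C" by simp
      fix a assume fs: "fsupp l a"
      define L where "L = lp_norm p {(i, j). a i j \<noteq> 0} (\<lambda>(i, j). a i j)"
      have B1: "L / C \<le> N1 a" "N1 a \<le> C * L"
        using main_bound[OF C strat assms(1) l Fx g1 fs] unfolding L_def by auto
      have B2: "L / C \<le> N2 a" "N2 a \<le> C * L"
        using main_bound[OF C strat assms(1) l Fy g2 fs] unfolding L_def by auto
      have "1 / (C*C) * N1 a \<le> 1 / (C*C) * (C * L)" using B1 Cpos by (intro mult_left_mono) auto
      also have "\<dots> = L / C" using Cpos by (simp add: field_simps)
      finally show "1 / (C*C) * N1 a \<le> N2 a" using B2 by linarith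
      have "L \<le> C * N1 a" using B1 Cpos by (simp add: field_simps)
      then have "C * L \<le> C * (C * N1 a)" using Cpos by (intro mult_left_mono) auto
      then show "N2 a \<le> C * C * N1 a" using B2 by (simp add: algebra_simps)
    qed
  qed
  show ?thesis using part1 part2 by blast
qed

end
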